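(* Let $n\ge2$. For every $l\in\mathbb{Z}$, $$X^{(n)}_l=\frac{1}{d_n}\sum_{\kappa\in I'_n}p_n\!\left(\mathbf{e}\!\left[\omega^{(n)}_{\kappa,1}\right]\right)\mathbf{e}\!\left[\omega^{(n)}_{\kappa,1}\cdot l\right]+\frac{1}{a_n}X^{(n-2)}_l.$$
   Context: Fix integers $a_1,a_2,\ldots\ge2$, $d_0=1$, $d_i=a_1\cdots a_i$, $\mathbf{e}[\alpha]=\exp(2\pi\sqrt{-1}\alpha)$. $I'_n=\{\kappa\in\{1,\dots,d_n\}\mid a_n\nmid\kappa\}$; $\omega^{(n)}_{\kappa,1}=\frac{\kappa}{d_n}-\lfloor\frac{\kappa}{d_n}\rfloor$. $p_n(t)=\prod_{i=1}^n(1-t^{d_{i-1}})^{(-1)^{n-i}}$ for $n\ge1$ (a polynomial), $p_0(t)=1$. For $n\ge1$ and $l\in\mathbb{Z}$, $X^{(n)}_l:=\frac{1}{d_n}\sum_{a=1}^{d_n}p_n(\mathbf{e}[\frac{a}{d_n}])\mathbf{e}[\frac{a}{d_n}l]$, and $X^{(0)}_l:=1$. *)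

theory Defs
  imports Complex_Main "HOL-Computational_Algebra.Polynomial"
begin

text \<open>The sequence a_1, a_2, ... is a function a :: nat => nat (a 0 unused).\<close>

definition dd :: "(nat \<Rightarrow> nat) \<Rightarrow> nat \<Rightarrow> nat" where
  "dd a i = (\<Prod>j\<in>{1..i}. a j)"

definition ee :: "real \<Rightarrow> complex" where
  "ee \<alpha> = exp (2 * of_real pi * \<i> * of_real \<alpha>)"

definition Iprime :: "(nat \<Rightarrow> nat) \<Rightarrow> nat \<Rightarrow> nat set" where
  "Iprime a n = {\<kappa> \<in> {1..dd a n}. \<not> a n dvd \<kappa>}"

definition omega1 :: "(nat \<Rightarrow> nat) \<Rightarrow> nat \<Rightarrow> nat \<Rightarrow> real" where
  "omega1 a n \<kappa> = real \<kappa> / real (dd a n) - of_int \<lfloor>real \<kappa> / real (dd a n)\<rfloor>"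

text \<open>p_n(t) = prod_{i=1}^n (1 - t^{d_{i-1}})^{(-1)^{n-i}}, which is a polynomial;
  realised as the exact quotient of the product of factors with exponent +1
  by the product of factors with exponent -1.\<close>
definition pfac :: "(nat \<Rightarrow> nat) \<Rightarrow> nat \<Rightarrow> complex poly" where
  "pfac a i = 1 - monom 1 (dd a (i - 1))"

definition ppoly :: "(nat \<Rightarrow> nat) \<Rightarrow> nat \<Rightarrow> complex poly" where
  "ppoly a n = (if n = 0 then 1 else
     (\<Prod>i\<in>{i\<in>{1..n}. even (n - i)}. pfac a i) div
     (\<Prod>i\<in>{i\<in>{1..n}. odd (n - i)}. pfac a i))"

definition X :: "(nat \<Rightarrow> nat) \<Rightarrow> nat \<Rightarrow> int \<Rightarrow> complex" where
  "X a n l = (if n = 0 then 1 else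
     (1 / of_nat (dd a n)) *
     (\<Sum>b = 1..dd a n. poly (ppoly a n) (ee (real b / real (dd a n)))
                        * ee (real b / real (dd a n) * of_int l)))"

end

theory Submission
  imports Defs "HOL-Analysis.Complex_Transcendental"
begin

definition Ev :: "(nat \<Rightarrow> nat) \<Rightarrow> nat \<Rightarrow> complex poly" where
  "Ev a n = (\<Prod>i\<in>{i\<in>{1..n}. even (n - i)}. pfac a i)"
definition Od :: "(nat \<Rightarrow> nat) \<Rightarrow> nat \<Rightarrow> complex poly" where
  "Od a n = (\<Prod>i\<in>{i\<in>{1..n}. odd (n - i)}. pfac a i)"
definition GG :: "(nat \<Rightarrow> nat) \<Rightarrow> nat \<Rightarrow> complex poly" where
  "GG a j = (\<Sum>t<a (Suc j). monom 1 (dd a j * t))"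

lemma dd_Suc: "dd a (Suc i) = a (Suc i) * dd a i"
  by (simp add: dd_def)

lemma dd_pos: assumes "\<forall>i\<ge>1. a i \<ge> 2" shows "dd a m > 0"
  unfolding dd_def using assms by (auto intro!: prod_pos)

lemma setE: "{i\<in>{1..Suc(Suc j)}. even(Suc(Suc j) - i)} = insert (Suc (Suc j)) {i\<in>{1..j}. even(j-i)}"
  by (auto simp: le_Suc_eq)

lemma setO: "{i\<in>{1..Suc(Suc j)}. odd(Suc(Suc j) - i)} = insert (Suc j) {i\<in>{1..j}. odd(j-i)}"
  by (auto simp: le_Suc_eq)

lemma Ev_SS: "Ev a (Suc (Suc j)) = pfac a (Suc (Suc j)) * Ev a j"
  unfolding Ev_def setE by (subst prod.insert) auto

lemma Od_SS: "Od a (Suc (Suc j)) = pfac a (Suc j) * Od a j"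
  unfolding Od_def setO by (subst prod.insert) auto

lemma pfac_nz: assumes "\<forall>i\<ge>1. a i \<ge> 2" shows "pfac a i \<noteq> 0"
proof
  assume "pfac a i = 0"
  hence "coeff (pfac a i) 0 = 0" by simp
  moreover have "dd a (i-1) > 0" using dd_pos[OF assms] .
  ultimately show False by (simp add: pfac_def coeff_monom)
qed

lemma Od_nz: assumes "\<forall>i\<ge>1. a i \<ge> 2" shows "Od a n \<noteq> 0"
  unfolding Od_def using pfac_nz[OF assms] by (simp add: prod_zero_iff)

lemma pfac_G: "pfac a (Suc (Suc j)) = pfac a (Suc j) * GG a j"
proof -
  have m: "\<And>n. monom (1::complex) n = [:0,1:]^n" by (simp add: monom_altdef)
  show ?thesis
    unfolding pfac_def GG_def m using one_diff_power_eq[of "[:0,1:]^dd a j" "a (Suc j)"]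
    by (simp add: dd_Suc mult.commute flip: power_mult)
qed

lemma ppoly_eq: "ppoly a n = Ev a n div Od a n"
proof (cases "n = 0")
  case True
  have "{i\<in>{1..n}. P i} = {}" for P using True by auto
  then show ?thesis using True by (simp add: ppoly_def Ev_def Od_def)
qed (simp add: ppoly_def Ev_def Od_def)

lemma Ev_OO: assumes "\<forall>i\<ge>1. a i \<ge> 2" shows "Ev a n = ppoly a n * Od a n"
proof (induction n rule: nat_induct2)
  case 0
  then show ?case by (simp add: Ev_def Od_def ppoly_def)
next
  case 1
  have e: "{i\<in>{1..1::nat}. even (1 - i)} = {1}" "{i\<in>{1..1::nat}. odd (1 - i)} = {}" by auto
  show ?case unfolding Ev_def Od_def ppoly_def e by simp
next
  case (step n)
  have "Ev a (n+2) = (GG a n * ppoly a n) * Od a (n+2)"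
    using step by (simp add: Ev_SS Od_SS pfac_G mult_ac)
  then show ?case using Od_nz[OF assms] by (simp add: ppoly_eq)
qed

lemma ppoly_SS: assumes "\<forall>i\<ge>1. a i \<ge> 2" shows "ppoly a (Suc (Suc j)) = GG a j * ppoly a j"
proof -
  have "Ev a (Suc (Suc j)) = (GG a j * ppoly a j) * Od a (Suc (Suc j))"
    using Ev_OO[OF assms, of j] by (simp add: Ev_SS Od_SS pfac_G mult_ac)
  then show ?thesis using Od_nz[OF assms] by (simp add: ppoly_eq)
qed

lemma ee_add: "ee (x + y) = ee x * ee y"
  unfolding ee_def by (simp add: distrib_left exp_add)

lemma ee_int: "ee (of_int z) = 1"
proof -
  have "exp ((2 * of_real (real_of_int z) * pi) * \<i>) = 1" using exp_integer_2pi[of "real_of_int z"] by simp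
  then show ?thesis unfolding ee_def by (simp add: mult_ac)
qed

lemma ee_nat: "ee (of_nat z) = 1"
  using ee_int[of "int z"] by simp

lemma ee_pow: "ee x ^ n = ee (real n * x)"
  unfolding ee_def by (simp add: exp_of_nat_mult[symmetric] mult_ac)

lemma ee_eq_1: assumes "ee x = 1" shows "\<exists>z. x = of_int z"
proof -
  from assms obtain z :: int where "Im (2 * of_real pi * \<i> * of_real x) = of_int (2 * z) * pi"
    unfolding ee_def exp_eq_1 by blast
  then have "x = of_int z" by simp
  then show ?thesis by blast
qed

lemma poly_GG: assumes "\<zeta> ^ dd a (Suc j) = 1"
  shows "poly (GG a j) \<zeta> = (if \<zeta> ^ dd a j = 1 then of_nat (a (Suc j)) else 0)"
proof -
  have p: "poly (GG a j) \<zeta> = (\<Sum>t<a (Suc j). (\<zeta> ^ dd a j) ^ t)"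
    unfolding GG_def by (simp add: poly_sum poly_monom power_mult)
  show ?thesis
  proof (cases "\<zeta> ^ dd a j = 1")
    case True then show ?thesis using p by simp
  next
    case False
    have "(1 - \<zeta> ^ dd a j) * poly (GG a j) \<zeta> = 1 - (\<zeta> ^ dd a j) ^ a (Suc j)"
      unfolding p by (rule one_diff_power_eq[symmetric])
    also have "\<dots> = 0" using assms by (simp add: dd_Suc mult.commute flip: power_mult)
    finally show ?thesis using False by simp
  qed
qed

lemma sum_mult_reindex: assumes "0 < (A::nat)"
  shows "sum F {b\<in>{1..A*m}. A dvd b} = (\<Sum>c\<in>{1..m}. F (A*c))"
proof -
  have "{b\<in>{1..A*m}. A dvd b} = (\<lambda>c. A*c) ` {1..m}"
  proof (intro set_eqI iffI)
    fix b assume "b \<in> {b\<in>{1..A*m}. A dvd b}"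
    then obtain c where "b = A*c" "1 \<le> A*c" "A*c \<le> A*m" by auto
    then show "b \<in> (\<lambda>c. A*c) ` {1..m}" using assms by (auto intro!: image_eqI[of _ _ c])
  next
    fix b assume "b \<in> (\<lambda>c. A*c) ` {1..m}"
    then show "b \<in> {b\<in>{1..A*m}. A dvd b}" using assms by auto
  qed
  moreover have "inj_on (\<lambda>c. A*c) {1..m}" using assms by (auto simp: inj_on_def)
  ultimately show ?thesis by (simp add: sum.reindex)
qed

lemma ee_mod_dvd: assumes "0 < B" "0 < (k::nat)"
  shows "(ee (real c / real (B*k)) ^ k = 1) = (B dvd c)"
proof -
  have e: "ee (real c / real (B*k)) ^ k = ee (real c / real B)"
    using assms by (simp add: ee_pow)
  show ?thesis
  proof
    assume "ee (real c / real (B*k)) ^ k = 1"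
    then obtain z where "real c / real B = of_int z" using e ee_eq_1 by metis
    then have "real c = real B * of_int z" using assms by (simp add: field_simps)
    then have "int c = int B * z" by (metis of_int_eq_iff of_int_mult of_int_of_nat_eq)
    then have "int B dvd int c" by simp
    then show "B dvd c" by simp
  next
    assume "B dvd c"
    then obtain z where "c = B * z" by auto
    then have "real c / real B = real z" using assms by simp
    then show "ee (real c / real (B*k)) ^ k = 1" using e ee_nat by simp
  qed
qed

theorem lemma4p5:
  fixes a :: "nat \<Rightarrow> nat" and n :: nat and l :: int
  assumes "\<forall>i\<ge>1. a i \<ge> 2"
    and "n \<ge> 2"
  shows "X a n l =
    (1 / of_nat (dd a n)) *
      (\<Sum>\<kappa>\<in>Iprime a n. poly (ppoly a n) (ee (omega1 a n \<kappa>)) * ee (omega1 a n \<kappa> * of_int l))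
    + (1 / of_nat (a n)) * X a (n - 2) l"
proof -
  obtain j where nj: "n = Suc (Suc j)" using assms(2) by (metis add_2_eq_Suc le_Suc_ex)
  define A where "A = a n"
  define B where "B = a (Suc j)"
  define k where "k = dd a j"
  define m where "m = dd a (Suc j)"
  define D where "D = dd a n"
  have A0: "0 < A" using assms(1) nj unfolding A_def by (metis le_add1 not_numeral_le_zero not_gr_zero plus_1_eq_Suc)
  have B0: "0 < B" using assms(1) unfolding B_def by (metis le_add1 not_numeral_le_zero not_gr_zero plus_1_eq_Suc)
  have k0: "0 < k" unfolding k_def using dd_pos[OF assms(1)] .
  have mBk: "m = B * k" unfolding m_def B_def k_def by (simp add: dd_Suc)
  have DAm: "D = A * m" unfolding D_def A_def m_def nj by (simp add: dd_Suc)
  define f where "f b = poly (ppoly a n) (ee (real b / real D)) * ee (real b / real D * of_int l)" for b :: nat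
  define g where "g c = poly (ppoly a j) (ee (real c / real k)) * ee (real c / real k * of_int l)" for c :: nat
  have Xn: "X a n l = 1 / of_nat D * (\<Sum>b=1..D. f b)"
    using nj unfolding X_def f_def D_def by simp
  have split: "{1..D} = Iprime a n \<union> {b\<in>{1..D}. A dvd b}"
    unfolding Iprime_def A_def D_def by blast
  have S: "(\<Sum>b=1..D. f b) = (\<Sum>b\<in>Iprime a n. f b) + (\<Sum>b\<in>{b\<in>{1..D}. A dvd b}. f b)"
  proof -
    have "(\<Sum>b\<in>Iprime a n \<union> {b\<in>{1..D}. A dvd b}. f b) = (\<Sum>b\<in>Iprime a n. f b) + (\<Sum>b\<in>{b\<in>{1..D}. A dvd b}. f b)"
      by (rule sum.union_disjoint) (unfold Iprime_def A_def D_def, auto)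
    then show ?thesis by (simp only: split[symmetric])
  qed
  have S1: "(\<Sum>b\<in>Iprime a n. f b) =
      (\<Sum>\<kappa>\<in>Iprime a n. poly (ppoly a n) (ee (omega1 a n \<kappa>)) * ee (omega1 a n \<kappa> * of_int l))"
  proof (rule sum.cong[OF refl])
    fix b
    define z where "z = \<lfloor>real b / real D\<rfloor>"
    have o: "omega1 a n b = real b / real D + of_int (- z)" unfolding omega1_def z_def D_def by simp
    have o2: "omega1 a n b * of_int l = real b / real D * of_int l + of_int (- z * l)"
      unfolding o by (simp add: algebra_simps)
    show "f b = poly (ppoly a n) (ee (omega1 a n b)) * ee (omega1 a n b * of_int l)"
      unfolding o2 unfolding o f_def by (simp only: ee_add ee_int mult_1_right)
  qed
  have S2: "(\<Sum>b\<in>{b\<in>{1..D}. A dvd b}. f b) = (\<Sum>c\<in>{1..m}. f (A*c))"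
    unfolding DAm by (rule sum_mult_reindex[OF A0])
  have fAc: "f (A*c) = (if B dvd c then of_nat B * g (c div B) else 0)" for c
  proof -
    define \<zeta> where "\<zeta> = ee (real c / real m)"
    have r: "real (A*c) / real D = real c / real m" using A0 unfolding DAm by simp
    have zm: "\<zeta> ^ dd a (Suc j) = 1" unfolding \<zeta>_def m_def[symmetric] using k0 B0 mBk
      by (simp add: ee_pow ee_nat)
    have fe: "f (A*c) = poly (GG a j) \<zeta> * (poly (ppoly a j) \<zeta> * ee (real c / real m * of_int l))"
      unfolding f_def r nj ppoly_SS[OF assms(1)] \<zeta>_def by simp
    have zk: "(\<zeta> ^ dd a j = 1) = (B dvd c)" unfolding \<zeta>_def k_def[symmetric] mBk
      using ee_mod_dvd[OF B0 k0] by simp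
    show ?thesis
    proof (cases "B dvd c")
      case True
      then obtain c' where c': "c = B * c'" by auto
      have "real c / real m = real c' / real k" using B0 unfolding c' mBk by simp
      then show ?thesis using True zk fe poly_GG[OF zm] c' B0 unfolding g_def \<zeta>_def B_def by simp
    next
      case False
      then show ?thesis using zk fe poly_GG[OF zm] by simp
    qed
  qed
  have S3: "(\<Sum>c\<in>{1..m}. f (A*c)) = of_nat B * (\<Sum>c'\<in>{1..k}. g c')"
  proof -
    have "(\<Sum>c\<in>{1..m}. f (A*c)) = (\<Sum>c\<in>{1..m}. if B dvd c then of_nat B * g (c div B) else 0)"
      using fAc by simp
    also have "\<dots> = (\<Sum>c\<in>{c\<in>{1..m}. B dvd c}. of_nat B * g (c div B))"
      by (rule sum.inter_filter[symmetric]) simp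
    also have "\<dots> = (\<Sum>c'\<in>{1..k}. of_nat B * g (B * c' div B))"
      unfolding mBk by (rule sum_mult_reindex[OF B0])
    also have "\<dots> = of_nat B * (\<Sum>c'\<in>{1..k}. g c')"
      using B0 by (simp add: sum_distrib_left)
    finally show ?thesis .
  qed
  have Xj: "X a j l = 1 / of_nat k * (\<Sum>c'\<in>{1..k}. g c')"
  proof (cases "j = 0")
    case True
    then have "k = 1" unfolding k_def dd_def by simp
    then show ?thesis using True unfolding g_def X_def ppoly_def
      by (simp add: ee_int[of l, simplified])
  next
    case False
    then show ?thesis unfolding X_def g_def k_def by simp
  qed
  have "X a n l = 1 / of_nat D * (\<Sum>\<kappa>\<in>Iprime a n. poly (ppoly a n) (ee (omega1 a n \<kappa>)) * ee (omega1 a n \<kappa> * of_int l))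
     + 1 / of_nat D * (of_nat B * (\<Sum>c'\<in>{1..k}. g c'))"
    unfolding Xn S S1 S2 S3 by (simp add: distrib_left)
  also have "1 / of_nat D * (of_nat B * (\<Sum>c'\<in>{1..k}. g c')) = 1 / of_nat A * X a j l"
    unfolding Xj DAm mBk using A0 B0 k0 by (simp add: field_simps)
  finally show ?thesis unfolding D_def A_def nj by simp
qed

end
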